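(* Let $C(t,p;x)=p+\sum_{n\ge1}x^n\sum_{D\in\mathcal{D}_n}t^{\mathrm{seg}(D)}p^{\mathrm{lseg}(D)}$, and write $C=C(t,p;x)$ and $C(t,1)=C(t,1;x)$. Then $$tp^2x^2C(t,1)^2+px(C-pxC-p)C(t,1)-(C-pxC-p)=0.$$
   Context: A Dyck path of semilength $n$ is a lattice path from $(0,0)$ to $(n,n)$ with east steps $(1,0)$ and north steps $(0,1)$ never passing above $y=x$; encode it as $d_1\cdots d_n$ with $d_i$ the number of north steps before the $i$-th east step. $\mathcal{D}_n$ is the set of these paths. A segment is a maximal string of at least two consecutive east steps of the same height; $\mathrm{seg}(D)$ is the number of segments. $\mathrm{lseg}(D)=i$ if the $i$-th east step is the last step of the leftmost segment of $D$, and $\mathrm{lseg}(D)=n+1$ if $D$ has no segment. *)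

theory Defs
  imports "HOL-Computational_Algebra.Formal_Power_Series"
begin

text \<open>A Dyck path of semilength n is encoded as the list [d_1,...,d_n] (0-indexed in
Isabelle: d ! (i-1) = d_i), where d_i is the number of north steps before the i-th east
step. The path never goes above y = x iff the sequence is weakly increasing and
d_i \<le> i - 1; the remaining north steps come after the last east step.\<close>

definition dyck_paths :: "nat \<Rightarrow> nat list set" where
  "dyck_paths n = {d. length d = n \<and> sorted d \<and> (\<forall>i<n. d ! i \<le> i)}"

text \<open>Segments: maximal index intervals [a,b] (0-indexed, a < b, i.e. at least two
east steps) of consecutive east steps at the same height.\<close>

definition segments :: "nat list \<Rightarrow> (nat \<times> nat) set" where
  "segments d = {(a, b). a < b \<and> b < length d \<and> (\<forall>k\<in>{a..b}. d ! k = d ! a)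
      \<and> (a = 0 \<or> d ! (a - 1) \<noteq> d ! a)
      \<and> (b = length d - 1 \<or> d ! (b + 1) \<noteq> d ! b)}"

definition seg :: "nat list \<Rightarrow> nat" where
  "seg d = card (segments d)"

definition lseg :: "nat list \<Rightarrow> nat" where
  "lseg d = (if segments d = {} then length d + 1
     else (let a0 = Min (fst ` segments d) in Suc (THE b. (a0, b) \<in> segments d)))"

definition Cfps :: "'a::comm_ring_1 \<Rightarrow> 'a \<Rightarrow> 'a fps" where
  "Cfps t p = Abs_fps (\<lambda>n. if n = 0 then p
      else (\<Sum>D\<in>dyck_paths n. t ^ seg D * p ^ lseg D))"

end

theory Submission imports Defs begin

lemma mem_segments:
  "(a,b) \<in> segments d \<longleftrightarrow> a < b \<and> b < length d \<and> (\<forall>k\<in>{a..b}. d ! k = d ! a)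
      \<and> (a = 0 \<or> d ! (a - 1) \<noteq> d ! a)
      \<and> (b = length d - 1 \<or> d ! (b + 1) \<noteq> d ! b)"
  by (simp add: segments_def)

lemma segments_lt: "(a,b) \<in> segments d \<Longrightarrow> a < b \<and> b < length d"
  unfolding mem_segments by blast

lemma segments_sub: "segments d \<subseteq> {..<length d} \<times> {..<length d}"
proof
  fix z assume "z \<in> segments d"
  then show "z \<in> {..<length d} \<times> {..<length d}"
    using segments_lt[of "fst z" "snd z" d] by (cases z) auto
qed

lemma finite_segments: "finite (segments d)"
  using segments_sub by (rule finite_subset) auto

lemma segments_unique_aux:
  assumes "(a,b) \<in> segments d" "(a,b') \<in> segments d" "b < b'" shows False
proof -
  have h1: "a < b" "\<forall>k\<in>{a..b}. d ! k = d ! a" "b = length d - 1 \<or> d ! (b + 1) \<noteq> d ! b"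
    using assms(1) unfolding mem_segments by blast+
  have h2: "b' < length d" "\<forall>k\<in>{a..b'}. d ! k = d ! a"
    using assms(2) unfolding mem_segments by blast+
  have "b + 1 \<in> {a..b'}" "b \<in> {a..b}" using h1(1) assms(3) by auto
  then have "d ! (b+1) = d ! a" "d ! b = d ! a" using h1(2) h2(2) by blast+
  moreover have "b \<noteq> length d - 1" using h2(1) assms(3) by linarith
  ultimately show False using h1(3) by simp
qed

lemma segments_unique:
  assumes "(a,b) \<in> segments d" "(a,b') \<in> segments d" shows "b = b'"
  using segments_unique_aux[OF assms] segments_unique_aux[OF assms(2,1)] by (cases "b < b'"; cases "b' < b") auto


lemma segments_short: "length d \<le> 1 \<Longrightarrow> segments d = {}"
  using segments_lt by fastforce

lemma segments_Nil[simp]: "segments [] = {}" by (simp add: segments_short)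
lemma segments_single[simp]: "segments [x] = {}" by (simp add: segments_short)

lemma segments_map_inj:
  assumes "inj f" shows "segments (map f xs) = segments xs"
proof -
  have "(a,b) \<in> segments (map f xs) \<longleftrightarrow> (a,b) \<in> segments xs" for a b
  proof -
    have e: "\<And>i j. i < length xs \<Longrightarrow> j < length xs \<Longrightarrow> (map f xs ! i = map f xs ! j) = (xs ! i = xs ! j)"
      using assms by (simp add: inj_eq)
    show ?thesis unfolding mem_segments length_map
    proof (cases "a < b \<and> b < length xs")
      case True
      then have "(\<forall>k\<in>{a..b}. map f xs ! k = map f xs ! a) = (\<forall>k\<in>{a..b}. xs ! k = xs ! a)"
        using e by auto
      moreover have "(a = 0 \<or> map f xs ! (a - 1) \<noteq> map f xs ! a) = (a = 0 \<or> xs ! (a - 1) \<noteq> xs ! a)"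
        using e True by (cases "a = 0") auto
      moreover have "(b = length xs - 1 \<or> map f xs ! (b + 1) \<noteq> map f xs ! b) = (b = length xs - 1 \<or> xs ! (b + 1) \<noteq> xs ! b)"
        using e True by (cases "b = length xs - 1") auto
      ultimately show "(a < b \<and> b < length xs \<and> (\<forall>k\<in>{a..b}. map f xs ! k = map f xs ! a) \<and>
     (a = 0 \<or> map f xs ! (a - 1) \<noteq> map f xs ! a) \<and> (b = length xs - 1 \<or> map f xs ! (b + 1) \<noteq> map f xs ! b)) =
    (a < b \<and> b < length xs \<and> (\<forall>k\<in>{a..b}. xs ! k = xs ! a) \<and> (a = 0 \<or> xs ! (a - 1) \<noteq> xs ! a) \<and>
     (b = length xs - 1 \<or> xs ! (b + 1) \<noteq> xs ! b))" by simp
    qed blast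
  qed
  then show ?thesis by auto
qed

lemma segments_replicate:
  assumes "2 \<le> L" shows "segments (replicate L x) = {(0, L - 1)}"
proof (intro set_eqI iffI)
  fix z assume z: "z \<in> segments (replicate L x)"
  obtain a b where [simp]: "z = (a,b)" by (cases z)
  from z have "a < b" "b < L" "a = 0 \<or> replicate L x ! (a - 1) \<noteq> replicate L x ! a"
     "b = L - 1 \<or> replicate L x ! (b + 1) \<noteq> replicate L x ! b"
    unfolding mem_segments \<open>z = (a,b)\<close> length_replicate by blast+
  then have "a = 0" "b = L - 1" by (cases "Suc b < L"; auto)+
  then show "z \<in> {(0, L - 1)}" by simp
next
  fix z :: "nat \<times> nat" assume "z \<in> {(0, L - 1)}"
  then have z: "z = (0, L - 1)" by simp
  have "\<forall>k\<in>{0..L - 1}. replicate L x ! k = replicate L x ! 0"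
    using assms by auto
  then show "z \<in> segments (replicate L x)" unfolding z mem_segments using assms by simp
qed

lemma segments_append_sub1:
  assumes ne: "xs \<noteq> []" "ys \<noteq> []" and bd: "last xs \<noteq> hd ys"
    and ab: "(a,b) \<in> segments (xs @ ys)" and that: "m = length xs"
  shows "(a,b) \<in> segments xs \<or> (m \<le> a \<and> (a - m, b - m) \<in> segments ys)"
proof -
  let ?d = "xs @ ys"
  have ab1: "a < b" "b < length ?d" "\<forall>k\<in>{a..b}. ?d ! k = ?d ! a"
      "a = 0 \<or> ?d ! (a - 1) \<noteq> ?d ! a" "b = length ?d - 1 \<or> ?d ! (b + 1) \<noteq> ?d ! b"
    using ab unfolding mem_segments by blast+
  have dm1: "?d ! (m - 1) = last xs" using ne that by (simp add: nth_append last_conv_nth)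
  have dm: "?d ! m = hd ys" using ne that by (simp add: nth_append hd_conv_nth)
  have ns: "\<not> (a < m \<and> m \<le> b)"
  proof
    assume h: "a < m \<and> m \<le> b"
    then have "m - 1 \<in> {a..b}" "m \<in> {a..b}" by auto
    then have "?d ! (m - 1) = ?d ! m" using ab1(3) by metis
    then show False using dm dm1 bd by simp
  qed
  show ?thesis
  proof (cases "b < m")
    case True
    have "(a,b) \<in> segments xs"
      unfolding mem_segments
    proof (intro conjI)
      show "a < b" by fact
      show "b < length xs" using True that by simp
      show "\<forall>k\<in>{a..b}. xs ! k = xs ! a"
      proof
        fix k assume k: "k \<in> {a..b}"
        then have "?d ! k = ?d ! a" using ab1(3) by blast
        moreover have "k < m" "a < m" using k True ab1(1) by auto
        ultimately show "xs ! k = xs ! a" using that by (simp add: nth_append)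
      qed
      show "a = 0 \<or> xs ! (a - 1) \<noteq> xs ! a"
      proof (cases "a = 0")
        case False
        then have "?d ! (a - 1) \<noteq> ?d ! a" using ab1(4) by blast
        moreover have "a - 1 < m" "a < m" using True ab1(1) by auto
        ultimately show ?thesis using that by (simp add: nth_append)
      qed simp
      show "b = length xs - 1 \<or> xs ! (b + 1) \<noteq> xs ! b"
      proof (cases "b = length xs - 1")
        case False
        then have "b + 1 < m" using True that by linarith
        moreover have "b \<noteq> length ?d - 1" using True that ne(2) by (cases ys) auto
        ultimately show ?thesis using ab1(5) True that by (auto simp: nth_append)
      qed simp
    qed
    then show ?thesis by simp
  next
    case False
    then have am: "m \<le> a" using ns ab1(1) by linarith
    have "(a - m, b - m) \<in> segments ys"
      unfolding mem_segments
    proof (intro conjI)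
      show "a - m < b - m" using am ab1(1) by linarith
      show "b - m < length ys" using ab1(2) that False by simp
      show "\<forall>k\<in>{a - m..b - m}. ys ! k = ys ! (a - m)"
      proof
        fix k assume "k \<in> {a - m..b - m}"
        then have "k + m \<in> {a..b}" using am ab1(1) by auto
        then have "?d ! (k + m) = ?d ! a" using ab1(3) by blast
        then show "ys ! k = ys ! (a - m)" using am that by (simp add: nth_append)
      qed
      show "a - m = 0 \<or> ys ! (a - m - 1) \<noteq> ys ! (a - m)"
      proof (cases "a = m")
        case False
        then have "a \<noteq> 0" "m \<le> a - 1" using am by auto
        then have "?d ! (a - 1) \<noteq> ?d ! a" using ab1(4) by blast
        then show ?thesis using am that \<open>m \<le> a - 1\<close> by (simp add: nth_append)
      qed simp
      show "b - m = length ys - 1 \<or> ys ! (b - m + 1) \<noteq> ys ! (b - m)"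
      proof (cases "b = length ?d - 1")
        case False
        then have "?d ! (b + 1) \<noteq> ?d ! b" using ab1(5) by blast
        then have "ys ! (b + 1 - m) \<noteq> ys ! (b - m)" using am ab1(1) that by (simp add: nth_append)
        moreover have "b + 1 - m = b - m + 1" using am ab1(1) by linarith
        ultimately show ?thesis by simp
      qed (use that in simp)
    qed
    then show ?thesis using am by simp
  qed
qed

lemma segments_append_sup1:
  assumes ne: "ys \<noteq> []" and bd: "last xs \<noteq> hd ys"
    and ab: "(a,b) \<in> segments xs"
  shows "(a,b) \<in> segments (xs @ ys)"
proof -
  let ?d = "xs @ ys"
  have ab1: "a < b" "b < length xs" "\<forall>k\<in>{a..b}. xs ! k = xs ! a"
      "a = 0 \<or> xs ! (a - 1) \<noteq> xs ! a" "b = length xs - 1 \<or> xs ! (b + 1) \<noteq> xs ! b"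
    using ab unfolding mem_segments by blast+
  have xne: "xs \<noteq> []" using ab1(2) by auto
  show ?thesis unfolding mem_segments
  proof (intro conjI)
    show "a < b" by fact
    show "b < length ?d" using ab1(2) by simp
    show "\<forall>k\<in>{a..b}. ?d ! k = ?d ! a"
    proof
      fix k assume k: "k \<in> {a..b}"
      then have "xs ! k = xs ! a" using ab1(3) by blast
      moreover have "k < length xs" "a < length xs" using k ab1(1,2) by auto
      ultimately show "?d ! k = ?d ! a" by (simp add: nth_append)
    qed
    show "a = 0 \<or> ?d ! (a - 1) \<noteq> ?d ! a" using ab1(4) ab1(1,2) by (auto simp: nth_append)
    show "b = length ?d - 1 \<or> ?d ! (b + 1) \<noteq> ?d ! b"
    proof (cases "b = length xs - 1")
      case True
      have bl: "b + 1 = length xs" using True ab1(2) by linarith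
      have "?d ! (b + 1) = hd ys" unfolding bl using ne by (simp add: hd_conv_nth nth_append)
      moreover have "?d ! b = last xs" using True ab1(2) xne by (simp add: nth_append last_conv_nth)
      ultimately show ?thesis using bd by simp
    next
      case False
      then have "b + 1 < length xs" using ab1(2) by linarith
      then show ?thesis using ab1(5) False ab1(2) by (auto simp: nth_append)
    qed
  qed
qed

lemma segments_append_sup2:
  assumes ne: "xs \<noteq> []" and bd: "last xs \<noteq> hd ys"
    and ab: "(a,b) \<in> segments ys"
  shows "(a + length xs, b + length xs) \<in> segments (xs @ ys)"
proof -
  let ?d = "xs @ ys"
  let ?m = "length xs"
  have ab1: "a < b" "b < length ys" "\<forall>k\<in>{a..b}. ys ! k = ys ! a"
      "a = 0 \<or> ys ! (a - 1) \<noteq> ys ! a" "b = length ys - 1 \<or> ys ! (b + 1) \<noteq> ys ! b"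
    using ab unfolding mem_segments by blast+
  have yne: "ys \<noteq> []" using ab1(2) by auto
  show ?thesis unfolding mem_segments
  proof (intro conjI)
    show "a + ?m < b + ?m" using ab1(1) by simp
    show "b + ?m < length ?d" using ab1(2) by simp
    show "\<forall>k\<in>{a + ?m..b + ?m}. ?d ! k = ?d ! (a + ?m)"
    proof
      fix k assume k: "k \<in> {a + ?m..b + ?m}"
      then have "k - ?m \<in> {a..b}" by auto
      then have "ys ! (k - ?m) = ys ! a" using ab1(3) by blast
      then show "?d ! k = ?d ! (a + ?m)" using k by (simp add: nth_append)
    qed
    show "a + ?m = 0 \<or> ?d ! (a + ?m - 1) \<noteq> ?d ! (a + ?m)"
    proof (cases "a = 0")
      case True
      have "?d ! (a + ?m - 1) = last xs" using True ne by (simp add: nth_append last_conv_nth)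
      moreover have "?d ! (a + ?m) = hd ys" using True yne by (simp add: nth_append hd_conv_nth)
      ultimately show ?thesis using bd by simp
    next
      case False
      then have "ys ! (a - 1) \<noteq> ys ! a" using ab1(4) by blast
      moreover have "a + ?m - 1 = (a - 1) + ?m" using False by simp
      ultimately show ?thesis by (simp add: nth_append)
    qed
    show "b + ?m = length ?d - 1 \<or> ?d ! (b + ?m + 1) \<noteq> ?d ! (b + ?m)"
    proof (cases "b = length ys - 1")
      case True
      then have "b + ?m = length ?d - 1" using ab1(2) by simp
      then show ?thesis by blast
    next
      case False
      then have "ys ! (b + 1) \<noteq> ys ! b" using ab1(5) by blast
      moreover have "b + ?m + 1 = (b + 1) + ?m" by simp
      ultimately show ?thesis by (simp add: nth_append)
    qed
  qed
qed

lemma segments_append: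
  assumes "xs = [] \<or> ys = [] \<or> last xs \<noteq> hd ys"
  shows "segments (xs @ ys) = segments xs \<union> (\<lambda>(a,b). (a + length xs, b + length xs)) ` segments ys"
proof (cases "xs = [] \<or> ys = []")
  case True
  then show ?thesis by auto
next
  case False
  then have ne: "xs \<noteq> []" "ys \<noteq> []" and bd: "last xs \<noteq> hd ys" using assms by auto
  show ?thesis
  proof (intro set_eqI iffI)
    fix z assume z: "z \<in> segments (xs @ ys)"
    obtain a b where [simp]: "z = (a,b)" by (cases z)
    from segments_append_sub1[OF ne bd, of a b "length xs"] z
    consider "(a,b) \<in> segments xs" | "length xs \<le> a" "(a - length xs, b - length xs) \<in> segments ys"
      by auto
    then show "z \<in> segments xs \<union> (\<lambda>(a,b). (a + length xs, b + length xs)) ` segments ys"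
    proof cases
      case 2
      then have "length xs \<le> b" using z by (auto simp: mem_segments)
      then have "(a,b) = (\<lambda>(a,b). (a + length xs, b + length xs)) (a - length xs, b - length xs)"
        using 2 by simp
      then have "(a,b) \<in> (\<lambda>(a,b). (a + length xs, b + length xs)) ` segments ys"
        using 2(2) by (rule image_eqI)
      then show ?thesis by simp
    qed simp
  next
    fix z assume "z \<in> segments xs \<union> (\<lambda>(a,b). (a + length xs, b + length xs)) ` segments ys"
    then show "z \<in> segments (xs @ ys)"
    proof
      assume "z \<in> segments xs" then show ?thesis using segments_append_sup1[OF ne(2) bd] by (cases z) simp
    next
      assume "z \<in> (\<lambda>(a,b). (a + length xs, b + length xs)) ` segments ys"
      then obtain a b where "(a,b) \<in> segments ys" "z = (a + length xs, b + length xs)" by auto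
      then show ?thesis using segments_append_sup2[OF ne(1) bd] by simp
    qed
  qed
qed

lemma seg_append:
  assumes "xs = [] \<or> ys = [] \<or> last xs \<noteq> hd ys"
  shows "seg (xs @ ys) = seg xs + seg ys"
proof -
  let ?f = "\<lambda>(a,b). (a + length xs, b + length xs)"
  have inj: "inj_on ?f (segments ys)" by (auto simp: inj_on_def)
  have disj: "segments xs \<inter> ?f ` segments ys = {}"
  proof -
    { fix a' b' assume "(a',b') \<in> segments ys" "(a'+length xs, b'+length xs) \<in> segments xs"
      then have False using segments_lt[of "a'+length xs" "b'+length xs" xs] by simp }
    then show ?thesis by auto
  qed
  show ?thesis unfolding seg_def segments_append[OF assms]
    using card_Un_disjoint[OF finite_segments finite_imageI[OF finite_segments] disj]
      card_image[OF inj] by simp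
qed

lemma leftmost_exists:
  assumes "segments d \<noteq> {}"
  obtains a b where "(a,b) \<in> segments d" "\<And>a' b'. (a',b') \<in> segments d \<Longrightarrow> a \<le> a'"
proof -
  let ?a = "Min (fst ` segments d)"
  have "?a \<in> fst ` segments d" using assms finite_segments by (intro Min_in) auto
  then obtain b where "(?a, b) \<in> segments d" by force
  moreover have "\<And>a' b'. (a',b') \<in> segments d \<Longrightarrow> ?a \<le> a'"
    using finite_segments by (metis Min_le finite_imageI fst_conv image_eqI)
  ultimately show ?thesis using that by blast
qed

lemma lseg_eq:
  assumes ab: "(a,b) \<in> segments d" and lm: "\<And>a' b'. (a',b') \<in> segments d \<Longrightarrow> a \<le> a'"
  shows "lseg d = Suc b"
proof -
  have ne: "segments d \<noteq> {}" using ab by auto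
  have "Min (fst ` segments d) = a"
  proof (rule Min_eqI)
    show "finite (fst ` segments d)" using finite_segments by simp
    show "a \<in> fst ` segments d" using ab by (metis fst_conv image_eqI)
    fix y assume "y \<in> fst ` segments d"
    then obtain z where "z \<in> segments d" "y = fst z" by blast
    then show "a \<le> y" using lm[of "fst z" "snd z"] by simp
  qed
  moreover have "(THE b. (a, b) \<in> segments d) = b"
  proof (rule the_equality)
    show "(a,b) \<in> segments d" by (rule ab)
    fix x assume "(a,x) \<in> segments d" then show "x = b" using segments_unique[OF ab] by blast
  qed
  ultimately show ?thesis using ne unfolding lseg_def by (simp add: Let_def)
qed

lemma lseg_empty: "segments d = {} \<Longrightarrow> lseg d = length d + 1"
  unfolding lseg_def by simp

lemma lseg_append:
  assumes bd: "xs = [] \<or> ys = [] \<or> last xs \<noteq> hd ys"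
  shows "lseg (xs @ ys) = (if segments xs = {} then length xs + lseg ys else lseg xs)"
proof -
  let ?f = "\<lambda>(a,b). (a + length xs, b + length xs)"
  have S: "segments (xs @ ys) = segments xs \<union> ?f ` segments ys" by (rule segments_append[OF bd])
  show ?thesis
  proof (cases "segments xs = {}")
    case False
    obtain a b where ab: "(a,b) \<in> segments xs" and lm: "\<And>a' b'. (a',b') \<in> segments xs \<Longrightarrow> a \<le> a'"
      using leftmost_exists[OF False] by blast
    have alt: "a < length xs" using segments_lt[OF ab] by simp
    have "lseg (xs @ ys) = Suc b"
    proof (rule lseg_eq)
      show "(a,b) \<in> segments (xs @ ys)" using S ab by simp
      fix a' b' assume "(a',b') \<in> segments (xs @ ys)"
      then have "(a',b') \<in> segments xs \<or> (a',b') \<in> ?f ` segments ys" using S by simp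
      then show "a \<le> a'" using lm alt by auto
    qed
    then show ?thesis using False lseg_eq[OF ab lm] by simp
  next
    case True
    show ?thesis
    proof (cases "segments ys = {}")
      case True2: True
      then have "segments (xs @ ys) = {}" using S True by simp
      then show ?thesis using True True2 by (simp add: lseg_empty)
    next
      case False
      obtain a b where ab: "(a,b) \<in> segments ys" and lm: "\<And>a' b'. (a',b') \<in> segments ys \<Longrightarrow> a \<le> a'"
        using leftmost_exists[OF False] by blast
      have "lseg (xs @ ys) = Suc (b + length xs)"
      proof (rule lseg_eq)
        show "(a + length xs, b + length xs) \<in> segments (xs @ ys)" using S ab True by force
        fix a' b' assume "(a',b') \<in> segments (xs @ ys)"
        then have "(a',b') \<in> ?f ` segments ys" using S True by simp
        then show "a + length xs \<le> a'" using lm by auto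
      qed
      then show ?thesis using True lseg_eq[OF ab lm] by simp
    qed
  qed
qed

lemma seg_map_inj: "inj f \<Longrightarrow> seg (map f d) = seg d"
  unfolding seg_def by (simp add: segments_map_inj)

lemma lseg_map_inj: "inj f \<Longrightarrow> lseg (map f d) = lseg d"
  unfolding lseg_def by (simp add: segments_map_inj)

lemma seg_lseg_replicate_append:
  assumes L: "2 \<le> L" and r: "r = [] \<or> hd r \<noteq> x"
  shows "seg (replicate L x @ r) = Suc (seg r)" "lseg (replicate L x @ r) = L"
    "segments (replicate L x @ r) \<noteq> {}"
proof -
  have bd: "replicate L x = [] \<or> r = [] \<or> last (replicate L x) \<noteq> hd r" using r L by auto
  have sr: "segments (replicate L x) = {(0, L - 1)}" by (rule segments_replicate[OF L])
  show "seg (replicate L x @ r) = Suc (seg r)"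
    unfolding seg_append[OF bd] by (simp add: seg_def sr)
  have "lseg (replicate L x) = L"
  proof -
    have "lseg (replicate L x) = Suc (L - 1)"
      by (rule lseg_eq[of 0]) (auto simp: sr)
    then show ?thesis using L by simp
  qed
  then show "lseg (replicate L x @ r) = L" unfolding lseg_append[OF bd] sr by simp
  show "segments (replicate L x @ r) \<noteq> {}" unfolding segments_append[OF bd] sr by simp
qed

definition W :: "'a::comm_ring_1 \<Rightarrow> 'a \<Rightarrow> nat list \<Rightarrow> 'a" where
  "W t p d = t ^ seg d * p ^ lseg d"

definition isT :: "nat list \<Rightarrow> bool" where
  "isT d \<longleftrightarrow> 2 \<le> length d \<and> d ! 1 = 0"

lemma W_one: "W t 1 d = t ^ seg d" by (simp add: W_def)

lemma W_cons_Suc: "W t p (0 # map Suc d) = p * W t p d"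
proof -
  have bd: "[0::nat] = [] \<or> map Suc d = [] \<or> last [0::nat] \<noteq> hd (map Suc d)"
    by (cases d) auto
  have e: "0 # map Suc d = [0] @ map Suc d" by simp
  have "seg (0 # map Suc d) = seg d" unfolding e seg_append[OF bd]
    by (simp add: seg_def seg_map_inj[of Suc, unfolded seg_def])
  moreover have "lseg (0 # map Suc d) = Suc (lseg d)" unfolding e lseg_append[OF bd]
    by (simp add: lseg_map_inj)
  ultimately show ?thesis by (simp add: W_def)
qed

lemma W_glue_b:
  assumes k: "2 \<le> k" and d3: "\<forall>x\<in>set d3. Suc x < k"
  shows "W t p (0 # (0 # map Suc d3) @ map ((+) k) d2) = t * p ^ 2 * W t 1 d3 * W t 1 d2"
proof -
  let ?X = "map Suc d3" and ?Y = "map ((+) k) d2"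
  have e: "0 # (0 # ?X) @ ?Y = replicate 2 0 @ (?X @ ?Y)" by (simp add: numeral_2_eq_2)
  have bd1: "?X = [] \<or> ?Y = [] \<or> last ?X \<noteq> hd ?Y"
  proof (cases "d3 = [] \<or> d2 = []")
    case False
    then have "last d3 \<in> set d3" by simp
    then have "Suc (last d3) < k" using d3 by blast
    then show ?thesis using False by (auto simp: last_map hd_map)
  qed auto
  have bd2: "?X @ ?Y = [] \<or> hd (?X @ ?Y) \<noteq> 0"
    using k by (cases d3; cases d2) auto
  have "seg (0 # (0 # ?X) @ ?Y) = Suc (seg d3 + seg d2)"
    unfolding e seg_lseg_replicate_append(1)[OF order.refl bd2] seg_append[OF bd1]
    by (simp add: seg_map_inj)
  moreover have "lseg (0 # (0 # ?X) @ ?Y) = 2"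
    unfolding e seg_lseg_replicate_append(2)[OF order.refl bd2] by simp
  ultimately show ?thesis by (simp add: W_def power_add)
qed

lemma isT_decomp:
  assumes "isT d" "d ! 0 = 0"
  obtains L r where "2 \<le> L" "r = [] \<or> hd r \<noteq> 0" "d = replicate L 0 @ r"
proof -
  let ?L = "length (takeWhile (\<lambda>v. v = 0) d)" and ?r = "dropWhile (\<lambda>v. v = 0) d"
  have "replicate ?L 0 = takeWhile (\<lambda>v. v = 0) d"
    by (rule replicate_length_same) (auto dest: set_takeWhileD)
  then have e: "d = replicate ?L 0 @ ?r" by (metis takeWhile_dropWhile_id)
  obtain a b rest where d: "d = a # b # rest" using assms(1) unfolding isT_def
    by (metis One_nat_def Suc_1 Suc_le_length_iff)
  have "a = 0" "b = 0" using assms d unfolding isT_def by auto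
  then have "2 \<le> ?L" using d by simp
  moreover have "?r = [] \<or> hd ?r \<noteq> 0" using hd_dropWhile[of "\<lambda>v. v = 0" d] by blast
  ultimately show ?thesis using that e by blast
qed
lemma W_glue_a:
  assumes T: "isT d1" "d1 ! 0 = 0" and k: "\<forall>x\<in>set d1. x < k"
  shows "W t p (0 # d1 @ map ((+) k) d2) = p * W t p d1 * W t 1 d2"
proof -
  obtain L r where L: "2 \<le> L" and r: "r = [] \<or> hd r \<noteq> 0" and d1: "d1 = replicate L 0 @ r"
    using isT_decomp[OF T] by blast
  have L': "2 \<le> Suc L" using L by simp
  have e: "0 # d1 = replicate (Suc L) 0 @ r" using d1 by simp
  have ne: "d1 \<noteq> []" using d1 L by auto
  have bd: "0 # d1 = [] \<or> map ((+) k) d2 = [] \<or> last (0 # d1) \<noteq> hd (map ((+) k) d2)"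
  proof (cases d2)
    case (Cons y ys)
    have "last d1 \<in> set d1" using ne by simp
    then have "last d1 < k" using k by blast
    then show ?thesis using ne Cons by simp
  qed simp
  have "seg (0 # d1 @ map ((+) k) d2) = seg d1 + seg d2"
    using seg_append[OF bd] seg_lseg_replicate_append(1)[OF L' r] seg_lseg_replicate_append(1)[OF L r]
    by (simp add: e d1 seg_map_inj)
  moreover have "lseg (0 # d1 @ map ((+) k) d2) = Suc (lseg d1)"
    using lseg_append[OF bd] seg_lseg_replicate_append(2,3)[OF L' r] seg_lseg_replicate_append(2)[OF L r]
    by (simp add: e d1)
  ultimately show ?thesis by (simp add: W_def power_add W_one)
qed

lemma mem_dyck: "d \<in> dyck_paths n \<longleftrightarrow> length d = n \<and> sorted d \<and> (\<forall>i<n. d ! i \<le> i)"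
  by (simp add: dyck_paths_def)

lemma dyck_set_lt: "d \<in> dyck_paths n \<Longrightarrow> x \<in> set d \<Longrightarrow> x < n"
  unfolding mem_dyck by (metis in_set_conv_nth le_less_trans)

lemma finite_dyck: "finite (dyck_paths n)"
proof (rule finite_subset)
  show "dyck_paths n \<subseteq> {xs. set xs \<subseteq> {..<n} \<and> length xs = n}"
    using dyck_set_lt by (auto simp: mem_dyck)
  show "finite {xs. set xs \<subseteq> {..<n} \<and> length xs = n}"
    by (rule finite_lists_length_eq) simp
qed

lemma dyck_0: "dyck_paths 0 = {[]}"
  by (auto simp: mem_dyck)

lemma dyck_hd: "d \<in> dyck_paths n \<Longrightarrow> 0 < n \<Longrightarrow> d ! 0 = 0"
  unfolding mem_dyck by auto

lemma cons_Suc_dyck: "d \<in> dyck_paths m \<Longrightarrow> 0 # map Suc d \<in> dyck_paths (Suc m)"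
  unfolding mem_dyck
proof (intro conjI allI impI)
  assume d: "length d = m \<and> sorted d \<and> (\<forall>i<m. d ! i \<le> i)"
  show "length (0 # map Suc d) = Suc m" using d by simp
  show "sorted (0 # map Suc d)" using d by (simp add: sorted_map)
  fix i assume "i < Suc m"
  then show "(0 # map Suc d) ! i \<le> i" using d by (cases i) auto
qed

lemma cons_Suc_not_isT: "\<not> isT (0 # map Suc d)"
  unfolding isT_def by (cases d) auto

lemma split_set:
  "{d \<in> dyck_paths (Suc m). \<not> isT d} = (\<lambda>d'. 0 # map Suc d') ` dyck_paths m"
proof (intro set_eqI iffI)
  fix d assume "d \<in> {d \<in> dyck_paths (Suc m). \<not> isT d}"
  then have dd: "d \<in> dyck_paths (Suc m)" and nT: "\<not> isT d" by auto
  then have len: "length d = Suc m" and so: "sorted d" and bd: "\<forall>i<Suc m. d ! i \<le> i"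
    unfolding mem_dyck by auto
  obtain x d0 where d: "d = x # d0" using len by (cases d) auto
  have x: "x = 0" using bd d by force
  have pos: "\<forall>v\<in>set d0. 0 < v"
  proof
    fix v assume v: "v \<in> set d0"
    then have ne: "d0 \<noteq> []" by auto
    then have "d ! 1 \<noteq> 0" using nT d unfolding isT_def by (cases d0) auto
    then have "0 < d0 ! 0" using d by simp
    moreover have "d0 ! 0 \<le> v"
    proof -
      have "sorted d0" using so d by simp
      moreover obtain j where "j < length d0" "v = d0 ! j" using v by (metis in_set_conv_nth)
      ultimately show ?thesis using sorted_nth_mono[of d0 0 j] by simp
    qed
    ultimately show "0 < v" by simp
  qed
  let ?d' = "map (\<lambda>v. v - 1) d0"
  have e: "map Suc ?d' = d0" using pos by (induction d0) auto
  have "?d' \<in> dyck_paths m" unfolding mem_dyck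
  proof (intro conjI allI impI)
    show "length ?d' = m" using len d by simp
    have "sorted d0" using so d by simp
    then have "sorted_wrt (\<le>) d0" by simp
    then have "sorted_wrt (\<lambda>x y. x - 1 \<le> y - 1) d0" by (rule sorted_wrt_mono_rel[rotated]) auto
    then show "sorted ?d'" by (simp add: sorted_map)
    fix i assume i: "i < m"
    then have "d ! Suc i \<le> Suc i" using bd by simp
    then show "?d' ! i \<le> i" using i len d by simp
  qed
  moreover have "d = 0 # map Suc ?d'" using e d x by simp
  ultimately show "d \<in> (\<lambda>d'. 0 # map Suc d') ` dyck_paths m" by blast
next
  fix d assume "d \<in> (\<lambda>d'. 0 # map Suc d') ` dyck_paths m"
  then show "d \<in> {d \<in> dyck_paths (Suc m). \<not> isT d}"
    using cons_Suc_dyck cons_Suc_not_isT by auto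
qed

lemma inj_cons_Suc: "inj (\<lambda>d'. 0 # map Suc d')"
  by (auto simp: inj_def)

lemma split_sum:
  fixes f :: "nat list \<Rightarrow> 'a::comm_ring_1"
  shows "(\<Sum>d\<in>dyck_paths (Suc m). f d) =
    (\<Sum>d\<in>dyck_paths (Suc m). if isT d then f d else 0) + (\<Sum>d\<in>dyck_paths m. f (0 # map Suc d))"
proof -
  have "(\<Sum>d\<in>dyck_paths (Suc m). f d) =
    (\<Sum>d\<in>dyck_paths (Suc m). if isT d then f d else 0) + (\<Sum>d\<in>dyck_paths (Suc m). if \<not> isT d then f d else 0)"
    unfolding sum.distrib[symmetric] by (rule sum.cong) auto
  also have "(\<Sum>d\<in>dyck_paths (Suc m). if \<not> isT d then f d else 0) = (\<Sum>d\<in>{d \<in> dyck_paths (Suc m). \<not> isT d}. f d)"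
    by (simp add: sum.inter_filter finite_dyck)
  also have "\<dots> = (\<Sum>d\<in>dyck_paths m. f (0 # map Suc d))"
    unfolding split_set by (subst sum.reindex) (auto intro: inj_on_subset[OF inj_cons_Suc])
  finally show ?thesis .
qed

definition glue :: "nat \<Rightarrow> nat list \<Rightarrow> nat list \<Rightarrow> nat list" where
  "glue k d1 d2 = 0 # d1 @ map ((+) (Suc k)) d2"

lemma glue_dyck:
  assumes km: "k \<le> m" and d1: "d1 \<in> dyck_paths k" and d2: "d2 \<in> dyck_paths (m - k)"
  shows "glue k d1 d2 \<in> dyck_paths (Suc m)"
proof -
  have l1: "length d1 = k" and s1: "sorted d1" and b1: "\<forall>i<k. d1 ! i \<le> i"
    using d1 unfolding mem_dyck by auto
  have l2: "length d2 = m - k" and s2: "sorted d2" and b2: "\<forall>i<m - k. d2 ! i \<le> i"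
    using d2 unfolding mem_dyck by auto
  have lt: "\<forall>x\<in>set d1. x < k" using d1 dyck_set_lt by blast
  show ?thesis unfolding mem_dyck glue_def
  proof (intro conjI allI impI)
    show "length (0 # d1 @ map ((+) (Suc k)) d2) = Suc m" using l1 l2 km by simp
    show "sorted (0 # d1 @ map ((+) (Suc k)) d2)"
      using s1 s2 lt by (auto simp: sorted_append sorted_map)
    fix i assume i: "i < Suc m"
    show "(0 # d1 @ map ((+) (Suc k)) d2) ! i \<le> i"
    proof (cases i)
      case (Suc j)
      show ?thesis
      proof (cases "j < k")
        case True
        then have "d1 ! j \<le> j" using b1 by simp
        then show ?thesis using Suc True l1 by (simp add: nth_append)
      next
        case False
        then have "j - k < m - k" using i Suc by simp
        then have "d2 ! (j - k) \<le> j - k" using b2 by simp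
        then show ?thesis using Suc False l1 l2 \<open>j - k < m - k\<close> by (simp add: nth_append)
      qed
    qed simp
  qed
qed

lemma glue_k:
  assumes km: "k \<le> m" and d1: "d1 \<in> dyck_paths k" and d2: "d2 \<in> dyck_paths (m - k)"
  shows "k = (LEAST j. j = m \<or> (j < m \<and> Suc j \<le> (d1 @ map ((+) (Suc k)) d2) ! j))"
proof (rule Least_equality[symmetric])
  have l1: "length d1 = k" and b1: "\<forall>i<k. d1 ! i \<le> i" using d1 unfolding mem_dyck by auto
  have l2: "length d2 = m - k" using d2 unfolding mem_dyck by auto
  show "k = m \<or> (k < m \<and> Suc k \<le> (d1 @ map ((+) (Suc k)) d2) ! k)"
  proof (cases "k = m")
    case False
    then have "k < m" using km by simp
    then have "0 < length d2" using l2 by simp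
    then show ?thesis using \<open>k < m\<close> l1 by (simp add: nth_append)
  qed simp
  fix j assume j: "j = m \<or> (j < m \<and> Suc j \<le> (d1 @ map ((+) (Suc k)) d2) ! j)"
  show "k \<le> j"
  proof (rule ccontr)
    assume "\<not> k \<le> j"
    then have jk: "j < k" by simp
    then have "j \<noteq> m" using km by simp
    then have "Suc j \<le> (d1 @ map ((+) (Suc k)) d2) ! j" using j by simp
    also have "\<dots> = d1 ! j" using jk l1 by (simp add: nth_append)
    also have "\<dots> \<le> j" using b1 jk by simp
    finally show False by simp
  qed
qed

lemma glue_inj: "inj_on (\<lambda>(k, d1, d2). glue k d1 d2) (SIGMA k:{..m}. dyck_paths k \<times> dyck_paths (m - k))"
proof (rule inj_onI)
  fix u v
  assume u: "u \<in> (SIGMA k:{..m}. dyck_paths k \<times> dyck_paths (m - k))"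
    and v: "v \<in> (SIGMA k:{..m}. dyck_paths k \<times> dyck_paths (m - k))"
    and eq0: "(\<lambda>(k, d1, d2). glue k d1 d2) u = (\<lambda>(k, d1, d2). glue k d1 d2) v"
  obtain k d1 d2 where uu: "u = (k, d1, d2)" by (cases u)
  obtain k' e1 e2 where vv: "v = (k', e1, e2)" by (cases v)
  have a: "k \<in> {..m}" "d1 \<in> dyck_paths k" "d2 \<in> dyck_paths (m - k)"
    "k' \<in> {..m}" "e1 \<in> dyck_paths k'" "e2 \<in> dyck_paths (m - k')"
    using u v uu vv by auto
  have eq: "glue k d1 d2 = glue k' e1 e2" using eq0 uu vv by simp
  have tl: "d1 @ map ((+) (Suc k)) d2 = e1 @ map ((+) (Suc k')) e2" using eq by (simp add: glue_def)
  have "k = k'" using glue_k[of k m d1 d2] glue_k[of k' m e1 e2] a tl by simp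
  moreover have "length d1 = length e1" using a \<open>k = k'\<close> by (simp add: mem_dyck)
  ultimately have "d1 = e1" "map ((+) (Suc k)) d2 = map ((+) (Suc k)) e2" using tl by auto
  moreover have "inj ((+) (Suc k))" by (simp add: inj_def)
  ultimately show "u = v" using \<open>k = k'\<close> uu vv by simp
qed

lemma glue_surj:
  assumes d: "d \<in> dyck_paths (Suc m)"
  shows "\<exists>k d1 d2. k \<le> m \<and> d1 \<in> dyck_paths k \<and> d2 \<in> dyck_paths (m - k) \<and> d = glue k d1 d2"
proof -
  have len: "length d = Suc m" and so: "sorted d" and bd: "\<forall>i<Suc m. d ! i \<le> i"
    using d unfolding mem_dyck by auto
  obtain x xs where dx: "d = x # xs" using len by (cases d) auto
  have x0: "x = 0" using bd dx by force
  have lxs: "length xs = m" using len dx by simp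
  have sxs: "sorted xs" using so dx by simp
  have bxs: "\<forall>j<m. xs ! j \<le> Suc j" using bd dx by auto
  define P where "P j \<longleftrightarrow> j = m \<or> (j < m \<and> Suc j \<le> xs ! j)" for j
  define k where "k = (LEAST j. P j)"
  have Pk: "P k" unfolding k_def by (rule LeastI[of P m]) (simp add: P_def)
  have km: "k \<le> m" unfolding k_def by (rule Least_le) (simp add: P_def)
  have below: "xs ! j \<le> j" if "j < k" for j
  proof -
    have "\<not> P j" using that unfolding k_def by (rule not_less_Least)
    moreover have "j < m" using that km by simp
    ultimately have "\<not> Suc j \<le> xs ! j" unfolding P_def by simp
    then show ?thesis by simp
  qed
  define d1 where "d1 = take k xs"
  define d2 where "d2 = map (\<lambda>v. v - Suc k) (drop k xs)"
  have "d1 \<in> dyck_paths k" unfolding mem_dyck d1_def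
  proof (intro conjI allI impI)
    show "length (take k xs) = k" using lxs km by simp
    show "sorted (take k xs)" using sxs by simp
    fix i assume "i < k" then show "take k xs ! i \<le> i" using below by simp
  qed
  moreover have "d2 \<in> dyck_paths (m - k)" unfolding mem_dyck d2_def
  proof (intro conjI allI impI)
    show "length (map (\<lambda>v. v - Suc k) (drop k xs)) = m - k" using lxs by simp
    have "sorted_wrt (\<le>) (drop k xs)" using sxs by simp
    then have "sorted_wrt (\<lambda>x y. x - Suc k \<le> y - Suc k) (drop k xs)"
      by (rule sorted_wrt_mono_rel[rotated]) auto
    then show "sorted (map (\<lambda>v. v - Suc k) (drop k xs))" by (simp add: sorted_map)
    fix i assume i: "i < m - k"
    then have "xs ! (k + i) \<le> Suc (k + i)" using bxs by simp
    then show "map (\<lambda>v. v - Suc k) (drop k xs) ! i \<le> i" using i lxs km by simp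
  qed
  moreover have "d = glue k d1 d2"
  proof -
    have ge: "Suc k \<le> v" if vin: "v \<in> set (drop k xs)" for v
    proof -
      have "k < m" using vin lxs by (cases "k < m") auto
      then have "Suc k \<le> xs ! k" using Pk unfolding P_def by simp
      moreover obtain i where "i < length (drop k xs)" "v = drop k xs ! i"
        using vin in_set_conv_nth[of v "drop k xs"] by blast
      then have "v = xs ! (k + i)" "k + i < length xs" using km lxs by auto
      moreover have "xs ! k \<le> xs ! (k + i)" using sxs \<open>k + i < length xs\<close> by (simp add: sorted_nth_mono)
      ultimately show ?thesis by simp
    qed
    have "map ((+) (Suc k)) d2 = drop k xs" unfolding d2_def map_map
    proof (rule map_idI)
      fix v assume "v \<in> set (drop k xs)"
      then have "Suc k \<le> v" by (rule ge)
      then show "((+) (Suc k) \<circ> (\<lambda>v. v - Suc k)) v = v" by simp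
    qed
    then show ?thesis unfolding glue_def dx x0 d1_def by simp
  qed
  ultimately show ?thesis using km by (intro exI[of _ k] exI[of _ d1] exI[of _ d2]) simp
qed

lemma glue_image: "dyck_paths (Suc m) = (\<lambda>(k, d1, d2). glue k d1 d2) ` (SIGMA k:{..m}. dyck_paths k \<times> dyck_paths (m - k))"
proof (intro set_eqI iffI)
  fix d assume "d \<in> dyck_paths (Suc m)"
  then obtain k d1 d2 where "k \<le> m" "d1 \<in> dyck_paths k" "d2 \<in> dyck_paths (m - k)" "d = glue k d1 d2"
    using glue_surj by blast
  then show "d \<in> (\<lambda>(k, d1, d2). glue k d1 d2) ` (SIGMA k:{..m}. dyck_paths k \<times> dyck_paths (m - k))"
    by force
next
  fix d assume "d \<in> (\<lambda>(k, d1, d2). glue k d1 d2) ` (SIGMA k:{..m}. dyck_paths k \<times> dyck_paths (m - k))"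
  then show "d \<in> dyck_paths (Suc m)" using glue_dyck by auto
qed

lemma glue_sum:
  fixes f :: "nat list \<Rightarrow> 'a::comm_ring_1"
  shows "(\<Sum>d\<in>dyck_paths (Suc m). f d) = (\<Sum>k\<le>m. \<Sum>d1\<in>dyck_paths k. \<Sum>d2\<in>dyck_paths (m - k). f (glue k d1 d2))"
proof -
  have "(\<Sum>d\<in>dyck_paths (Suc m). f d) = (\<Sum>(k, d1, d2)\<in>(SIGMA k:{..m}. dyck_paths k \<times> dyck_paths (m - k)). f (glue k d1 d2))"
    unfolding glue_image by (subst sum.reindex[OF glue_inj]) (simp add: case_prod_beta)
  also have "\<dots> = (\<Sum>k\<le>m. \<Sum>(d1, d2)\<in>dyck_paths k \<times> dyck_paths (m - k). f (glue k d1 d2))"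
    by (subst sum.Sigma[symmetric]) (auto simp: finite_dyck)
  also have "\<dots> = (\<Sum>k\<le>m. \<Sum>d1\<in>dyck_paths k. \<Sum>d2\<in>dyck_paths (m - k). f (glue k d1 d2))"
    by (simp add: sum.cartesian_product)
  finally show ?thesis .
qed

definition cc :: "'a::comm_ring_1 \<Rightarrow> 'a \<Rightarrow> nat \<Rightarrow> 'a" where
  "cc t p n = (\<Sum>d\<in>dyck_paths n. W t p d)"

definition tt :: "'a::comm_ring_1 \<Rightarrow> 'a \<Rightarrow> nat \<Rightarrow> 'a" where
  "tt t p n = (\<Sum>d\<in>dyck_paths n. if isT d then W t p d else 0)"

lemma W_Nil: "W t p [] = p"
  by (simp add: W_def seg_def lseg_empty)

lemma Cfps_nth: "fps_nth (Cfps t p) n = cc t p n"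
  unfolding Cfps_def cc_def W_def by (simp add: dyck_0 seg_def lseg_empty)

lemma tt_0: "tt t p 0 = 0"
  by (simp add: tt_def dyck_0 isT_def)

lemma claim1: "cc t p (Suc m) = tt t p (Suc m) + p * cc t p m"
  unfolding cc_def tt_def split_sum[of "W t p" m] W_cons_Suc sum_distrib_left ..

lemma isT_glue:
  assumes "d1 \<in> dyck_paths k"
  shows "isT (glue k d1 d2) \<longleftrightarrow> 0 < k"
proof (cases k)
  case 0
  then have "d1 = []" using assms by (simp add: mem_dyck)
  then show ?thesis using 0 by (cases d2) (auto simp: isT_def glue_def)
next
  case (Suc j)
  then have "d1 \<noteq> []" "d1 ! 0 = 0" using assms dyck_hd[OF assms] by (auto simp: mem_dyck)
  then show ?thesis using Suc by (cases d1) (auto simp: isT_def glue_def)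
qed

lemma sum_shift0:
  fixes h :: "nat \<Rightarrow> 'a::comm_ring_1"
  assumes "h 0 = 0"
  shows "(\<Sum>k\<le>m. h k) = (\<Sum>j<m. h (Suc j))"
proof (cases m)
  case 0 then show ?thesis using assms by simp
next
  case (Suc m')
  show ?thesis unfolding Suc by (subst sum.atMost_Suc_shift) (simp add: lessThan_Suc_atMost assms)
qed

lemma claim2:
  "tt t p (Suc m) = (\<Sum>j<m. p * tt t p (Suc j) * cc t 1 (m - Suc j) + t * p ^ 2 * cc t 1 j * cc t 1 (m - Suc j))"
proof -
  let ?f = "\<lambda>d. if isT d then W t p d else 0"
  let ?h = "\<lambda>k. \<Sum>d1\<in>dyck_paths k. \<Sum>d2\<in>dyck_paths (m - k). ?f (glue k d1 d2)"
  have "tt t p (Suc m) = (\<Sum>k\<le>m. ?h k)"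
    unfolding tt_def by (rule glue_sum)
  also have "\<dots> = (\<Sum>j<m. ?h (Suc j))"
    by (rule sum_shift0) (simp add: isT_glue)
  also have "\<dots> = (\<Sum>j<m. p * tt t p (Suc j) * cc t 1 (m - Suc j) + t * p ^ 2 * cc t 1 j * cc t 1 (m - Suc j))"
  proof (rule sum.cong[OF refl])
    fix j assume j: "j \<in> {..<m}"
    let ?g = "\<lambda>d1. \<Sum>d2\<in>dyck_paths (m - Suc j). W t p (glue (Suc j) d1 d2)"
    have "?h (Suc j) = (\<Sum>d1\<in>dyck_paths (Suc j). ?g d1)"
      by (rule sum.cong[OF refl]) (simp add: isT_glue)
    also have "\<dots> = (\<Sum>d1\<in>dyck_paths (Suc j). if isT d1 then ?g d1 else 0) + (\<Sum>d3\<in>dyck_paths j. ?g (0 # map Suc d3))"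
      by (rule split_sum)
    also have "(\<Sum>d1\<in>dyck_paths (Suc j). if isT d1 then ?g d1 else 0) = p * tt t p (Suc j) * cc t 1 (m - Suc j)"
    proof -
      have "(\<Sum>d1\<in>dyck_paths (Suc j). if isT d1 then ?g d1 else 0)
          = (\<Sum>d1\<in>dyck_paths (Suc j). (if isT d1 then W t p d1 else 0) * (p * cc t 1 (m - Suc j)))"
      proof (rule sum.cong[OF refl])
        fix d1 assume d1: "d1 \<in> dyck_paths (Suc j)"
        have lt: "\<forall>x\<in>set d1. x < Suc (Suc j)" using dyck_set_lt[OF d1] by fastforce
        have h0: "d1 ! 0 = 0" using dyck_hd[OF d1] by simp
        show "(if isT d1 then ?g d1 else 0) = (if isT d1 then W t p d1 else 0) * (p * cc t 1 (m - Suc j))"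
        proof (cases "isT d1")
          case True
          have "?g d1 = (\<Sum>d2\<in>dyck_paths (m - Suc j). p * W t p d1 * W t 1 d2)"
            unfolding glue_def by (rule sum.cong[OF refl]) (rule W_glue_a[OF True h0 lt])
          also have "\<dots> = W t p d1 * (p * cc t 1 (m - Suc j))"
            by (simp add: cc_def sum_distrib_left mult_ac)
          finally show ?thesis using True by simp
        qed simp
      qed
      also have "\<dots> = p * tt t p (Suc j) * cc t 1 (m - Suc j)"
        by (simp add: tt_def sum_distrib_left sum_distrib_right mult_ac)
      finally show ?thesis .
    qed
    also have "(\<Sum>d3\<in>dyck_paths j. ?g (0 # map Suc d3)) = t * p ^ 2 * cc t 1 j * cc t 1 (m - Suc j)"
    proof -
      have "(\<Sum>d3\<in>dyck_paths j. ?g (0 # map Suc d3))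
          = (\<Sum>d3\<in>dyck_paths j. \<Sum>d2\<in>dyck_paths (m - Suc j). t * p ^ 2 * W t 1 d3 * W t 1 d2)"
      proof (rule sum.cong[OF refl])
        fix d3 assume d3: "d3 \<in> dyck_paths j"
        have lt: "\<forall>x\<in>set d3. Suc x < Suc (Suc j)" using dyck_set_lt[OF d3] by fastforce
        show "?g (0 # map Suc d3) = (\<Sum>d2\<in>dyck_paths (m - Suc j). t * p ^ 2 * W t 1 d3 * W t 1 d2)"
          unfolding glue_def by (rule sum.cong[OF refl]) (rule W_glue_b[OF _ lt], simp)
      qed
      also have "\<dots> = t * p ^ 2 * cc t 1 j * cc t 1 (m - Suc j)"
        by (simp add: cc_def sum_distrib_left sum_distrib_right mult_ac)
      finally show ?thesis .
    qed
    finally show "?h (Suc j) = p * tt t p (Suc j) * cc t 1 (m - Suc j) + t * p ^ 2 * cc t 1 j * cc t 1 (m - Suc j)" .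
  qed
  finally show ?thesis .
qed

lemma cc_0: "cc t p 0 = p"
  by (simp add: cc_def dyck_0 W_Nil)

lemma E1: "Cfps t p - fps_const p * fps_X * Cfps t p - fps_const p = Abs_fps (tt t p)"
proof (rule fps_ext)
  fix n
  have a: "fps_const p * fps_X * Cfps t p = fps_const p * (fps_X * Cfps t p)" by (simp add: mult.assoc)
  show "fps_nth (Cfps t p - fps_const p * fps_X * Cfps t p - fps_const p) n = fps_nth (Abs_fps (tt t p)) n"
  proof (cases n)
    case 0
    then show ?thesis unfolding a by (simp add: Cfps_nth cc_0 tt_0)
  next
    case (Suc m)
    then show ?thesis unfolding a by (simp add: Cfps_nth claim1)
  qed
qed

lemma E2: "Abs_fps (tt t p) = fps_const p * (fps_X * (Abs_fps (tt t p) * Cfps t 1))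
   + fps_const (t * p^2) * (fps_X^2 * (Cfps t 1 * Cfps t 1))"
proof (rule fps_ext)
  fix n
  show "fps_nth (Abs_fps (tt t p)) n = fps_nth (fps_const p * (fps_X * (Abs_fps (tt t p) * Cfps t 1))
   + fps_const (t * p^2) * (fps_X^2 * (Cfps t 1 * Cfps t 1))) n"
  proof (cases n)
    case 0
    then show ?thesis by (simp add: tt_0 fps_X_power_mult_nth)
  next
    case (Suc m)
    have A: "fps_nth (Abs_fps (tt t p) * Cfps t 1) m = (\<Sum>j<m. tt t p (Suc j) * cc t 1 (m - Suc j))"
    proof -
      have "fps_nth (Abs_fps (tt t p) * Cfps t 1) m = (\<Sum>i\<le>m. tt t p i * cc t 1 (m - i))"
        by (simp add: fps_mult_nth Cfps_nth atLeast0AtMost)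
      also have "\<dots> = (\<Sum>j<m. tt t p (Suc j) * cc t 1 (m - Suc j))"
        by (rule sum_shift0) (simp add: tt_0)
      finally show ?thesis .
    qed
    have B: "fps_nth (fps_X^2 * (Cfps t 1 * Cfps t 1)) (Suc m) = (\<Sum>j<m. cc t 1 j * cc t 1 (m - Suc j))"
    proof (cases m)
      case 0 then show ?thesis by (simp add: fps_X_power_mult_nth)
    next
      case (Suc m')
      have "fps_nth (fps_X^2 * (Cfps t 1 * Cfps t 1)) (Suc m) = fps_nth (Cfps t 1 * Cfps t 1) m'"
        using Suc by (simp add: fps_X_power_mult_nth)
      also have "\<dots> = (\<Sum>i\<le>m'. cc t 1 i * cc t 1 (m' - i))"
        by (simp add: fps_mult_nth Cfps_nth atLeast0AtMost)
      also have "\<dots> = (\<Sum>j<m. cc t 1 j * cc t 1 (m - Suc j))"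
        using Suc by (simp add: lessThan_Suc_atMost)
      finally show ?thesis .
    qed
    have "fps_nth (fps_const p * (fps_X * (Abs_fps (tt t p) * Cfps t 1))
      + fps_const (t * p^2) * (fps_X^2 * (Cfps t 1 * Cfps t 1))) (Suc m)
      = p * fps_nth (Abs_fps (tt t p) * Cfps t 1) m + t * p^2 * fps_nth (fps_X^2 * (Cfps t 1 * Cfps t 1)) (Suc m)"
      by simp
    also have "\<dots> = p * (\<Sum>j<m. tt t p (Suc j) * cc t 1 (m - Suc j)) + t * p^2 * (\<Sum>j<m. cc t 1 j * cc t 1 (m - Suc j))"
      unfolding A B ..
    also have "\<dots> = (\<Sum>j<m. p * tt t p (Suc j) * cc t 1 (m - Suc j) + t * p ^ 2 * cc t 1 j * cc t 1 (m - Suc j))"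
      by (simp add: sum.distrib sum_distrib_left mult.assoc)
    also have "\<dots> = tt t p (Suc m)" by (rule claim2[symmetric])
    finally show ?thesis unfolding Suc by simp
  qed
qed

theorem lemma4p5:
  fixes t p :: "'a::comm_ring_1"
  defines "C \<equiv> Cfps t p" and "C1 \<equiv> Cfps t 1"
  shows "fps_const (t * p ^ 2) * fps_X ^ 2 * C1 ^ 2
         + fps_const p * fps_X * (C - fps_const p * fps_X * C - fps_const p) * C1
         - (C - fps_const p * fps_X * C - fps_const p) = 0"
proof -
  let ?T = "Abs_fps (tt t p)"
  have e1: "C - fps_const p * fps_X * C - fps_const p = ?T" unfolding C_def by (rule E1)
  have e2: "?T = fps_const p * (fps_X * (?T * C1)) + fps_const (t * p^2) * (fps_X^2 * (C1 * C1))"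
    unfolding C1_def by (rule E2)
  have "fps_const (t * p ^ 2) * fps_X ^ 2 * C1 ^ 2 + fps_const p * fps_X * ?T * C1
      = fps_const p * (fps_X * (?T * C1)) + fps_const (t * p^2) * (fps_X^2 * (C1 * C1))"
    by (simp add: power2_eq_square mult.assoc add.commute)
  also have "\<dots> = ?T" using e2 by simp
  finally show ?thesis unfolding e1 by simp
qed

end
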